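(* Let $A>0$, and for $\delta>0$ let $R=1-A\delta$, $g^0_\delta(r,r')=\mathbf 1_{r,r'\in[0,R]}G^{\rm neum}_\delta(r,r')$, $g^0_{n\delta}=g^0_\delta*\cdots*g^0_\delta$ ($n$-fold composition of integral kernels), and let $N_\delta\in\mathbb N$ satisfy $\delta(N_\delta-1)<1\le\delta N_\delta$. Then there is $a>0$ such that for every $\delta$ small enough $$\int g^0_{\delta N_\delta}(r,r')\,dr'\le1-a\qquad\text{for all }r\in[0,1-A\delta].$$
   Context: $G^{\rm neum}_t(r,r')$ is the Green function of $\partial_t\rho=\frac12\partial_r^2\rho$ on $[0,1]$ with Neumann boundary conditions: $G^{\rm neum}_t(r,r')=\sum_kG_t(r,r'_k)$, $G_t(r,r')=e^{-(r-r')^2/2t}/\sqrt{2\pi t}$, with $r'_k$ the images of $r'$ under repeated reflections of $[0,1]$ about its endpoints. Composition: $(g*h)(r,r')=\int g(r,s)h(s,r')ds$. *)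

theory Defs
  imports "HOL-Analysis.Analysis"
begin

definition heatG :: "real \<Rightarrow> real \<Rightarrow> real \<Rightarrow> real" where
  "heatG t r r' = exp (- ((r - r')\<^sup>2) / (2 * t)) / sqrt (2 * pi * t)"

text \<open>Neumann Green function on [0,1]: sum over all images of r' under repeated
  reflections about 0 and 1, i.e. the points 2k + r' and 2k - r', k an integer.\<close>
definition Gneum :: "real \<Rightarrow> real \<Rightarrow> real \<Rightarrow> real" where
  "Gneum t r r' = (\<Sum>\<^sub>\<infinity>k::int. heatG t r (2 * of_int k + r') + heatG t r (2 * of_int k - r'))"

definition kcomp :: "(real \<Rightarrow> real \<Rightarrow> real) \<Rightarrow> (real \<Rightarrow> real \<Rightarrow> real) \<Rightarrow> real \<Rightarrow> real \<Rightarrow> real" where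
  "kcomp g h r r' = integral {0..1} (\<lambda>s. g r s * h s r')"

definition kpow :: "(real \<Rightarrow> real \<Rightarrow> real) \<Rightarrow> nat \<Rightarrow> real \<Rightarrow> real \<Rightarrow> real" where
  "kpow g n = ((kcomp g) ^^ (n - 1)) g"

definition g0 :: "real \<Rightarrow> real \<Rightarrow> real \<Rightarrow> real \<Rightarrow> real" where
  "g0 A \<delta> r r' = (if r \<in> {0..1 - A*\<delta>} \<and> r' \<in> {0..1 - A*\<delta>} then Gneum \<delta> r r' else 0)"

end

theory Submission
  imports Defs "HOL-Probability.Distributions"
begin


lemma heatG_nd: "t > 0 \<Longrightarrow> heatG t r z = normal_density r (sqrt t) z"
  by (simp add: heatG_def normal_density_def power2_commute)

lemma heatG_nonneg: "t > 0 \<Longrightarrow> heatG t r z \<ge> 0"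
  by (simp add: heatG_def)

lemma heatG_pos: "t > 0 \<Longrightarrow> heatG t r z > 0"
  by (simp add: heatG_def)

lemma heatG_int: "t > 0 \<Longrightarrow> (heatG t a has_integral 1) UNIV"
proof -
  assume t: "t > 0"
  have "((normal_density a (sqrt t)) has_integral (integral\<^sup>L lborel (normal_density a (sqrt t)))) UNIV"
    by (rule has_integral_integral_lborel) (rule integrable_normal_density, simp add: t)
  then show ?thesis using t integral_normal_density[of "sqrt t" a] by (simp add: heatG_nd[OF t, abs_def])
qed

lemma continuous_heatG[continuous_intros]:
  assumes "t > 0" "continuous_on S f" "continuous_on S g"
  shows "continuous_on S (\<lambda>x. heatG t (f x) (g x))"
  unfolding heatG_def using assms by (intro continuous_intros) auto

lemma heatG_mono: "t > 0 \<Longrightarrow> \<bar>a - b\<bar> \<le> \<bar>c - d\<bar> \<Longrightarrow> heatG t c d \<le> heatG t a b"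
  unfolding heatG_def
  by (intro divide_right_mono) (auto simp: abs_le_square_iff  divide_right_mono intro!: divide_right_mono)


lemma sym_filterlim: "filterlim (\<lambda>n::nat. {-int n..int n}) (finite_subsets_at_top (UNIV::int set)) sequentially"
  unfolding filterlim_finite_subsets_at_top
proof (intro allI impI)
  fix X :: "int set" assume "finite X \<and> X \<subseteq> UNIV"
  then have "bdd_above (abs ` X)" by (simp add: bdd_above_finite)
  then obtain m where m: "\<And>k. k \<in> X \<Longrightarrow> \<bar>k\<bar> \<le> m" by (auto simp: bdd_above_def)
  show "\<forall>\<^sub>F n in sequentially. finite {- int n..int n} \<and> X \<subseteq> {- int n..int n} \<and> {- int n..int n} \<subseteq> UNIV"
    using eventually_ge_at_top[of "nat m"]
  proof eventually_elim
    case (elim n)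
    then show ?case using m by force
  qed
qed

lemma has_sum_sym_lim:
  fixes f :: "int \<Rightarrow> real"
  assumes "(f has_sum s) UNIV"
  shows "(\<lambda>n. \<Sum>k\<in>{-int n..int n}. f k) \<longlonglongrightarrow> s"
proof -
  have "(sum f \<longlongrightarrow> s) (finite_subsets_at_top UNIV)" using assms by (simp add: has_sum_def)
  from filterlim_compose[OF this sym_filterlim] show ?thesis by (simp add: o_def)
qed

lemma nonneg_sym_has_sum:
  fixes f :: "int \<Rightarrow> real"
  assumes nn: "\<And>k. f k \<ge> 0"
    and lim: "(\<lambda>n. \<Sum>k\<in>{-int n..int n}. f k) \<longlonglongrightarrow> s"
  shows "(f has_sum s) UNIV"
proof -
  have mono: "(\<Sum>k\<in>{-int n..int n}. f k) \<le> s" for n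
  proof (rule LIMSEQ_le_const[OF lim])
    show "\<exists>N. \<forall>m\<ge>N. (\<Sum>k\<in>{-int n..int n}. f k) \<le> (\<Sum>k\<in>{-int m..int m}. f k)"
      by (intro exI[of _ n] allI impI sum_mono2) (auto simp: nn)
  qed
  have summ: "f summable_on UNIV"
  proof (rule nonneg_bdd_above_summable_on)
    show "bdd_above (sum f ` {F. F \<subseteq> UNIV \<and> finite F})"
    proof (rule bdd_aboveI2)
      fix F :: "int set" assume "F \<in> {F. F \<subseteq> UNIV \<and> finite F}"
      then have fin: "finite F" by simp
      then have "bdd_above (abs ` F)" by (simp add: bdd_above_finite)
      then obtain m where m: "\<And>k. k \<in> F \<Longrightarrow> \<bar>k\<bar> \<le> m" by (auto simp: bdd_above_def)
      have "sum f F \<le> (\<Sum>k\<in>{-int (nat m)..int (nat m)}. f k)"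
        by (rule sum_mono2) (use m nn in force)+
      also have "\<dots> \<le> s" by (rule mono)
      finally show "sum f F \<le> s" .
    qed
  qed (simp add: nn)
  then have "(f has_sum infsum f UNIV) UNIV" by simp
  from has_sum_sym_lim[OF this] lim have "infsum f UNIV = s" using LIMSEQ_unique by blast
  with summ show ?thesis by (metis has_sum_infsum)
qed

lemma L_MC:
  fixes f :: "int \<Rightarrow> real \<Rightarrow> real"
  assumes cont: "\<And>k. continuous_on {a..b} (f k)"
    and nn: "\<And>k y. y \<in> {a..b} \<Longrightarrow> f k y \<ge> 0"
    and summ: "\<And>y. y \<in> {a..b} \<Longrightarrow> (\<lambda>k. f k y) summable_on UNIV"
    and I: "((\<lambda>k. integral {a..b} (f k)) has_sum I) UNIV"
  shows "((\<lambda>y. \<Sum>\<^sub>\<infinity>k. f k y) has_integral I) {a..b}"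
proof -
  define S where "S n y = (\<Sum>k\<in>{-int n..int n}. f k y)" for n y
  have intS: "S n integrable_on {a..b}" for n
    unfolding S_def by (intro integrable_sum integrable_continuous_interval cont) simp
  have integralS: "integral {a..b} (S n) = (\<Sum>k\<in>{-int n..int n}. integral {a..b} (f k))" for n
    unfolding S_def by (intro integral_sum integrable_continuous_interval cont) simp
  have monoS: "S n y \<le> S (Suc n) y" if "y \<in> {a..b}" for n y
    unfolding S_def by (rule sum_mono2) (auto intro: nn that)
  have limS: "(\<lambda>n. S n y) \<longlonglongrightarrow> (\<Sum>\<^sub>\<infinity>k. f k y)" if "y \<in> {a..b}" for y
    unfolding S_def by (rule has_sum_sym_lim) (use summ[OF that] in simp)
  have limI: "(\<lambda>n. integral {a..b} (S n)) \<longlonglongrightarrow> I"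
    unfolding integralS by (rule has_sum_sym_lim[OF I])
  have bnd: "bounded (range (\<lambda>n. integral {a..b} (S n)))"
    using convergent_imp_bounded[OF limI] by (simp add: o_def)
  from monotone_convergence_increasing[OF intS monoS limS bnd]
  have "(\<lambda>y. \<Sum>\<^sub>\<infinity>k. f k y) integrable_on {a..b}"
    and l2: "(\<lambda>n. integral {a..b} (S n)) \<longlonglongrightarrow> integral {a..b} (\<lambda>y. \<Sum>\<^sub>\<infinity>k. f k y)" by auto
  moreover have "integral {a..b} (\<lambda>y. \<Sum>\<^sub>\<infinity>k. f k y) = I" using LIMSEQ_unique[OF l2 limI] .
  ultimately show ?thesis by (metis has_integral_integrable_integral)
qed

lemma int_UNIV_lim:
  fixes \<phi> :: "real \<Rightarrow> real"
  assumes cont: "continuous_on UNIV \<phi>" and nn: "\<And>z. \<phi> z \<ge> 0" and int: "\<phi> integrable_on UNIV"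
    and mono: "\<And>n z. z \<in> I n \<Longrightarrow> z \<in> I (Suc n)"
    and cov: "\<And>z. \<exists>n. z \<in> I n"
    and intI: "\<And>n. \<phi> integrable_on I n"
  shows "(\<lambda>n. integral (I n) \<phi>) \<longlonglongrightarrow> integral UNIV \<phi>"
proof -
  define f where "f n z = (if z \<in> I n then \<phi> z else 0)" for n z
  have i1: "f n integrable_on UNIV" for n
    unfolding f_def using intI integrable_restrict_UNIV by blast
  have i2: "integral UNIV (f n) = integral (I n) \<phi>" for n
    unfolding f_def by (rule integral_restrict_UNIV)
  have m: "f n z \<le> f (Suc n) z" for n z
    unfolding f_def using mono nn by auto
  have l: "(\<lambda>n. f n z) \<longlonglongrightarrow> \<phi> z" for z
  proof -
    obtain n where "z \<in> I n" using cov by blast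
    have "\<forall>\<^sub>F m in sequentially. f m z = \<phi> z"
      using eventually_ge_at_top[of n]
    proof eventually_elim
      case (elim m)
      have "z \<in> I m" using \<open>z \<in> I n\<close> elim
      proof (induction m)
        case 0 then show ?case by simp
      next
        case (Suc m) then show ?case using mono by (cases "n = Suc m") auto
      qed
      then show ?case by (simp add: f_def)
    qed
    then show ?thesis by (rule tendsto_eventually)
  qed
  have b: "bounded (range (\<lambda>n. integral UNIV (f n)))"
  proof -
    have "\<bar>integral UNIV (f n)\<bar> \<le> integral UNIV \<phi>" for n
    proof -
      have "0 \<le> integral UNIV (f n)" by (rule integral_nonneg[OF i1]) (simp add: f_def nn)
      moreover have "integral UNIV (f n) \<le> integral UNIV \<phi>"
        by (rule integral_le[OF i1 int]) (simp add: f_def nn)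
      ultimately show ?thesis by simp
    qed
    then show ?thesis by (intro boundedI[of _ "integral UNIV \<phi>"]) auto
  qed
  from monotone_convergence_increasing[OF i1 m l b] show ?thesis by (simp add: i2)
qed


lemma term_eq:
  fixes \<phi> :: "real \<Rightarrow> real" and c :: real
  assumes cont: "continuous_on UNIV \<phi>"
  shows "integral {0..1} (\<lambda>y. \<phi> (c + y) + \<phi> (c - y)) = integral {c-1..c+1} \<phi>"
proof -
  have ci: "\<phi> integrable_on {u..v}" for u v
    by (rule integrable_continuous_interval) (rule continuous_on_subset[OF cont], simp)
  have c1: "continuous_on UNIV (\<lambda>y. \<phi> (c + y))" "continuous_on UNIV (\<lambda>y. \<phi> (c - y))"
    by (intro continuous_on_compose2[OF cont] continuous_intros; simp)+
  have "integral {0..1} (\<lambda>y. \<phi> (c + y) + \<phi> (c - y)) =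
        integral {0..1} (\<lambda>y. \<phi> (c + y)) + integral {0..1} (\<lambda>y. \<phi> (c - y))"
    by (rule integral_add; rule integrable_continuous_interval; rule continuous_on_subset[OF c1(1)] continuous_on_subset[OF c1(2)]; simp)
  also have "integral {0..1} (\<lambda>y. \<phi> (c + y)) = integral {c..c+1} \<phi>"
    using integral_shift_Icc_real[of 0 1 \<phi> c] by (simp add: o_def add.commute)
  also have "integral {0..1} (\<lambda>y. \<phi> (c - y)) = integral {-1..0} (\<lambda>u. \<phi> (c + u))"
    using Henstock_Kurzweil_Integration.integral_reflect_real[of "0" "-1" "\<lambda>u. \<phi> (c + u)"] by simp
  also have "\<dots> = integral {c-1..c} \<phi>"
    using integral_shift_Icc_real[of "-1" 0 \<phi> c] by (simp add: o_def add.commute)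
  also have "integral {c..c+1} \<phi> + integral {c-1..c} \<phi> = integral {c-1..c+1} \<phi>"
    using Henstock_Kurzweil_Integration.integral_combine[of "c-1" c "c+1" \<phi>] ci by simp
  finally show ?thesis .
qed

lemma sym_sum_eq:
  fixes \<phi> :: "real \<Rightarrow> real"
  assumes cont: "continuous_on UNIV \<phi>"
  shows "(\<Sum>k\<in>{-int n..int n}. integral {0..1} (\<lambda>y. \<phi> (2 * of_int k + y) + \<phi> (2 * of_int k - y)))
         = integral {-2*real n-1..2*real n+1} \<phi>"
proof (induction n)
  case 0
  then show ?case using term_eq[OF cont, of 0] by simp
next
  case (Suc n)
  have ci: "\<phi> integrable_on {u..v}" for u v
    by (rule integrable_continuous_interval) (rule continuous_on_subset[OF cont], simp)
  have set: "{-int (Suc n)..int (Suc n)} = insert (-int (Suc n)) (insert (int (Suc n)) {-int n..int n})"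
    by auto
  have e1: "integral {0..1} (\<lambda>y. \<phi> (2 * of_int (-int (Suc n)) + y) + \<phi> (2 * of_int (-int (Suc n)) - y)) = integral {-2*real n-3..-2*real n-1} \<phi>"
  proof -
    have "integral {0..1} (\<lambda>y. \<phi> (2 * of_int (-int (Suc n)) + y) + \<phi> (2 * of_int (-int (Suc n)) - y))
      = integral {2 * of_int (-int (Suc n)) - 1..2 * of_int (-int (Suc n)) + 1} \<phi>" by (rule term_eq[OF cont])
    also have "2 * of_int (-int (Suc n)) - 1 = -2*real n-(3::real)" by simp
    also have "2 * of_int (-int (Suc n)) + 1 = -2*real n-(1::real)" by simp
    finally show ?thesis .
  qed
  have e2: "integral {0..1} (\<lambda>y. \<phi> (2 * of_int (int (Suc n)) + y) + \<phi> (2 * of_int (int (Suc n)) - y)) = integral {2*real n+1..2*real n+3} \<phi>"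
  proof -
    have "integral {0..1} (\<lambda>y. \<phi> (2 * of_int (int (Suc n)) + y) + \<phi> (2 * of_int (int (Suc n)) - y))
      = integral {2 * of_int (int (Suc n)) - 1..2 * of_int (int (Suc n)) + 1} \<phi>" by (rule term_eq[OF cont])
    also have "2 * of_int (int (Suc n)) - 1 = 2*real n+(1::real)" by simp
    also have "2 * of_int (int (Suc n)) + 1 = 2*real n+(3::real)" by simp
    finally show ?thesis .
  qed
  have "(\<Sum>k\<in>{-int (Suc n)..int (Suc n)}. integral {0..1} (\<lambda>y. \<phi> (2 * of_int k + y) + \<phi> (2 * of_int k - y)))
     = integral {-2*real n-3..-2*real n-1} \<phi> + (integral {2*real n+1..2*real n+3} \<phi> + integral {-2*real n-1..2*real n+1} \<phi>)"
    unfolding set by (subst sum.insert, simp, simp, subst sum.insert, simp, simp, simp only: e1 e2 Suc)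
  also have "integral {2*real n+1..2*real n+3} \<phi> + integral {-2*real n-1..2*real n+1} \<phi> = integral {-2*real n-1..2*real n+3} \<phi>"
    using Henstock_Kurzweil_Integration.integral_combine[of "-2*real n-1" "2*real n+1" "2*real n+3" \<phi>] ci by simp
  also have "integral {-2*real n-3..-2*real n-1} \<phi> + \<dots> = integral {-2*real n-3..2*real n+3} \<phi>"
    using Henstock_Kurzweil_Integration.integral_combine[of "-2*real n-3" "-2*real n-1" "2*real n+3" \<phi>] ci by simp
  also have "{-2*real n-3..2*real n+3} = {-2*real (Suc n)-1..2*real (Suc n)+1}"
    by (rule arg_cong2[where f=atLeastAtMost]) simp_all
  finally show ?case .
qed

lemma unfold_has_sum:
  fixes \<phi> :: "real \<Rightarrow> real"
  assumes cont: "continuous_on UNIV \<phi>" and nn: "\<And>z. \<phi> z \<ge> 0" and int: "\<phi> integrable_on UNIV"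
  shows "((\<lambda>k::int. integral {0..1} (\<lambda>y. \<phi> (2 * of_int k + y) + \<phi> (2 * of_int k - y))) has_sum integral UNIV \<phi>) UNIV"
proof (rule nonneg_sym_has_sum)
  show "0 \<le> integral {0..1} (\<lambda>y. \<phi> (2 * of_int k + y) + \<phi> (2 * of_int k - y))" for k
    by (subst term_eq[OF cont]) (rule integral_nonneg, rule integrable_continuous_interval,
        rule continuous_on_subset[OF cont], auto simp: nn)
  have ci: "\<phi> integrable_on {u..v}" for u v
    by (rule integrable_continuous_interval) (rule continuous_on_subset[OF cont], simp)
  have "(\<lambda>n. integral {-2*real n-1..2*real n+1} \<phi>) \<longlonglongrightarrow> integral UNIV \<phi>"
  proof (rule int_UNIV_lim[OF cont nn int])
    show "\<And>n z. z \<in> {-2*real n-1..2*real n+1} \<Longrightarrow> z \<in> {-2*real (Suc n)-1..2*real (Suc n)+1}" by auto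
    show "\<exists>n. z \<in> {-2*real n-1..2*real n+1}" for z
    proof -
      obtain n where "\<bar>z\<bar> \<le> real n" using real_arch_simple by blast
      then show ?thesis by (intro exI[of _ n]) auto
    qed
  qed (rule ci)
  then show "(\<lambda>n. \<Sum>k\<in>{-int n..int n}. integral {0..1} (\<lambda>y. \<phi> (2 * of_int k + y) + \<phi> (2 * of_int k - y))) \<longlonglongrightarrow> integral UNIV \<phi>"
    by (simp add: sym_sum_eq[OF cont])
qed


definition T :: "real \<Rightarrow> real \<Rightarrow> real \<Rightarrow> int \<Rightarrow> real" where
  "T t x y k = heatG t x (2 * of_int k + y) + heatG t x (2 * of_int k - y)"

lemma Gneum_T: "Gneum t x y = (\<Sum>\<^sub>\<infinity>k. T t x y k)"
  by (simp add: Gneum_def T_def)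

lemma T_nonneg: "t > 0 \<Longrightarrow> T t x y k \<ge> 0"
  by (simp add: T_def heatG_nonneg add_nonneg_nonneg)

lemma int_exp_summable:
  fixes c :: real assumes c: "c > 0"
  shows "(\<lambda>k::int. exp (- c * \<bar>of_int k\<bar>)) summable_on UNIV"
proof -
  let ?g = "\<lambda>k::int. exp (- c * \<bar>of_int k\<bar>)"
  have q: "\<bar>exp (-c)\<bar> < 1" using c by simp
  have s1: "?g summable_on range int"
  proof (subst summable_on_reindex)
    show "inj_on int UNIV" by simp
    have "summable (\<lambda>n. exp (-c) ^ n)" by (rule summable_geometric) (use q in simp)
    moreover have "(?g \<circ> int) = (\<lambda>n. exp (-c) ^ n)"
      by (simp add: fun_eq_iff exp_of_nat_mult[symmetric] mult.commute)
    ultimately show "(?g \<circ> int) summable_on UNIV"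
      by (auto intro: summable_nonneg_imp_summable_on)
  qed
  have s2: "?g summable_on range (\<lambda>n::nat. - int n - 1)"
  proof (subst summable_on_reindex)
    show "inj_on (\<lambda>n::nat. - int n - 1) UNIV" by (auto simp: inj_on_def)
    have "summable (\<lambda>n. exp (-c) ^ n)" by (rule summable_geometric) (use q in simp)
    then have "summable (\<lambda>n. exp (-c) * exp (-c) ^ n)" by (rule summable_mult)
    moreover have "(?g \<circ> (\<lambda>n::nat. - int n - 1)) = (\<lambda>n. exp (-c) * exp (-c) ^ n)"
    proof
      fix n :: nat
      have "\<bar>of_int (- int n - 1) :: real\<bar> = real n + 1" by simp
      then show "(?g \<circ> (\<lambda>n::nat. - int n - 1)) n = exp (-c) * exp (-c) ^ n"
        by (simp add: exp_of_nat_mult[symmetric] exp_add[symmetric] algebra_simps)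
    qed
    ultimately show "(?g \<circ> (\<lambda>n::nat. - int n - 1)) summable_on UNIV"
      by (auto intro: summable_nonneg_imp_summable_on)
  qed
  have un: "UNIV = range int \<union> range (\<lambda>n::nat. - int n - 1)"
  proof -
    have "k \<in> range int \<union> range (\<lambda>n::nat. - int n - 1)" for k :: int
    proof (cases "k \<ge> 0")
      case True then show ?thesis by (auto intro: image_eqI[of _ _ "nat k"])
    next
      case False then show ?thesis by (auto intro!: image_eqI[of _ _ "nat (-k-1)"])
    qed
    then show ?thesis by blast
  qed
  have "?g summable_on (range int \<union> range (\<lambda>n::nat. - int n - 1))"
    by (rule summable_on_Un_disjoint[OF s1 s2]) auto
  then show ?thesis using un by simp
qed

lemma sq_bound:
  fixes u :: real and k :: int
  assumes "\<bar>u\<bar> \<le> 2"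
  shows "(u - 2 * of_int k)\<^sup>2 \<ge> \<bar>of_int k\<bar> - 1"
proof (cases "k = 0")
  case True
  have "(-1::real) \<le> u\<^sup>2" using zero_le_power2[of u] by linarith
  then show ?thesis using True by simp
next
  case False
  then have k1: "\<bar>of_int k\<bar> \<ge> (1::real)" by linarith
  define m where "m = \<bar>of_int k\<bar> - (1::real)"
  have m0: "m \<ge> 0" using k1 m_def by simp
  have "\<bar>u - 2 * of_int k\<bar> \<ge> 2 * m" using assms unfolding m_def by (cases "(of_int k::real) \<ge> 0"; simp add: abs_if split: if_splits; linarith)
  then have "(u - 2 * of_int k)\<^sup>2 \<ge> (2*m)\<^sup>2"
    using m0 by (metis abs_ge_zero abs_le_square_iff abs_mult_pos abs_of_nonneg mult_nonneg_nonneg zero_le_numeral order_trans)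
  moreover have "(2*m)\<^sup>2 \<ge> m"
  proof (cases "m \<ge> 1")
    case True then show ?thesis by (simp add: power2_eq_square)
  next
    case False
    then have "\<bar>of_int k\<bar> < (2::real)" unfolding m_def by simp
    then have "\<bar>k\<bar> < 2" by linarith
    then have "\<bar>k\<bar> = 1" using False m0 \<open>k \<noteq> 0\<close> by linarith
    then have "m = 0" unfolding m_def by simp
    then show ?thesis by simp
  qed
  ultimately show ?thesis unfolding m_def by linarith
qed

lemma heat_tail:
  assumes t: "t > 0" and u: "\<bar>x - y\<bar> \<le> 2"
  shows "heatG t x (2 * of_int k + y) \<le> exp (1/(2*t)) / sqrt (2*pi*t) * exp (- (1/(2*t)) * \<bar>of_int k\<bar>)"
proof -
  have "(x - (2 * of_int k + y))\<^sup>2 = ((x - y) - 2 * of_int k)\<^sup>2" by (simp add: algebra_simps)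
  also have "\<dots> \<ge> \<bar>of_int k\<bar> - 1" by (rule sq_bound[OF u])
  finally have h: "(x - (2 * of_int k + y))\<^sup>2 \<ge> \<bar>of_int k\<bar> - 1" .
  have "exp (- (x - (2 * of_int k + y))\<^sup>2 / (2 * t)) \<le> exp (- (\<bar>of_int k\<bar> - 1) / (2*t))"
    using h t by (intro iffD2[OF exp_le_cancel_iff] divide_right_mono) auto
  also have "\<dots> = exp (1/(2*t)) * exp (- (1/(2*t)) * \<bar>of_int k\<bar>)"
    using t by (simp add: exp_add[symmetric] add_divide_distrib[symmetric] divide_simps)
  finally show ?thesis unfolding heatG_def using t
    by (simp add: divide_right_mono mult.commute)
qed

definition TB :: "real \<Rightarrow> int \<Rightarrow> real" where
  "TB t k = 2 * (exp (1/(2*t)) / sqrt (2*pi*t) * exp (- (1/(2*t)) * \<bar>of_int k\<bar>))"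

lemma TB_summable: "t > 0 \<Longrightarrow> TB t summable_on UNIV"
  unfolding TB_def
  by (intro summable_on_cmult_right int_exp_summable) simp

lemma T_le_TB:
  assumes t: "t > 0" and xy: "x \<in> {0..1}" "y \<in> {0..1}"
  shows "T t x y k \<le> TB t k"
proof -
  have e: "heatG t x (2 * of_int k - y) = heatG t x (2 * of_int k + (-y))" by simp
  have h1: "heatG t x (2 * of_int k + y) \<le> exp (1/(2*t)) / sqrt (2*pi*t) * exp (- (1/(2*t)) * \<bar>of_int k\<bar>)"
    by (rule heat_tail[OF t]) (use xy in auto)
  have h2: "heatG t x (2 * of_int k - y) \<le> exp (1/(2*t)) / sqrt (2*pi*t) * exp (- (1/(2*t)) * \<bar>of_int k\<bar>)"
    unfolding e by (rule heat_tail[OF t]) (use xy in auto)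
  show ?thesis unfolding T_def TB_def using h1 h2 by linarith
qed

lemma T_summable:
  assumes t: "t > 0" and xy: "x \<in> {0..1}" "y \<in> {0..1}"
  shows "T t x y summable_on UNIV"
  by (rule summable_on_comparison_test[OF TB_summable[OF t]]) (use T_le_TB[OF t xy] T_nonneg[OF t] in auto)

lemma G_nonneg: "t > 0 \<Longrightarrow> x \<in> {0..1} \<Longrightarrow> y \<in> {0..1} \<Longrightarrow> Gneum t x y \<ge> 0"
  unfolding Gneum_T by (rule infsum_nonneg) (simp add: T_nonneg)

lemma G_ge_heat:
  assumes t: "t > 0" and xy: "x \<in> {0..1}" "y \<in> {0..1}"
  shows "heatG t x y \<le> Gneum t x y"
proof -
  have "heatG t x y \<le> T t x y 0" unfolding T_def using heatG_nonneg[OF t] by simp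
  also have "T t x y 0 = sum (T t x y) {0}" by simp
  also have "\<dots> \<le> Gneum t x y" unfolding Gneum_T
    by (rule finite_sum_le_has_sum[OF has_sum_infsum[OF T_summable[OF t xy]]]) (auto simp: T_nonneg t)
  finally show ?thesis .
qed

lemma G_cont:
  assumes t: "t > 0"
  shows "continuous_on ({0..1}\<times>{0..1}) (\<lambda>p. Gneum t (fst p) (snd p))"
proof -
  have ul: "uniform_limit ({0..1}\<times>{0..1}) (\<lambda>X p. \<Sum>k\<in>X. T t (fst p) (snd p) k)
      (\<lambda>p. \<Sum>\<^sub>\<infinity>k\<in>UNIV. T t (fst p) (snd p) k) (finite_subsets_at_top UNIV)"
    by (rule Weierstrass_m_test_general[OF _ TB_summable[OF t]])
       (use T_le_TB[OF t] T_nonneg[OF t] in \<open>auto simp: mem_Times_iff\<close>)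
  have c: "\<forall>\<^sub>F X in finite_subsets_at_top UNIV. continuous_on ({0..1}\<times>{0..1}) (\<lambda>p. \<Sum>k\<in>X. T t (fst p) (snd p) k)"
    unfolding T_def using t by (intro eventually_finite_subsets_at_top_weakI continuous_intros) auto
  show ?thesis unfolding Gneum_T
    by (rule uniform_limit_theorem[OF c ul]) simp
qed


lemma heat_exp:
  assumes t: "t > 0"
  shows "heatG t x z * exp (s * z) = exp (s * x + s\<^sup>2 * t / 2) * heatG t (x + s * t) z"
proof -
  have sq: "(x + s * t - z)\<^sup>2 = (x - z)\<^sup>2 + 2 * s * t * (x - z) + s\<^sup>2 * t\<^sup>2"
    by (simp add: power2_eq_square algebra_simps)
  have d: "((x - z)\<^sup>2 + 2 * s * t * (x - z) + s\<^sup>2 * t\<^sup>2) / (2 * t) = (x - z)\<^sup>2 / (2 * t) + s * (x - z) + s\<^sup>2 * t / 2"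
    using t by (simp add: add_divide_distrib power2_eq_square)
  have "- (x - z)\<^sup>2 / (2 * t) + s * z = (s * x + s\<^sup>2 * t / 2) + - (x + s * t - z)\<^sup>2 / (2 * t)"
    unfolding sq minus_divide_left[symmetric] d by (simp add: right_diff_distrib)
  then have "exp (- (x - z)\<^sup>2 / (2 * t)) * exp (s * z) = exp (s * x + s\<^sup>2 * t / 2) * exp (- (x + s * t - z)\<^sup>2 / (2 * t))"
    by (simp add: exp_add[symmetric])
  then show ?thesis unfolding heatG_def by (simp add: field_simps)
qed

lemma heat_cosh_int:
  assumes t: "t > 0"
  shows "((\<lambda>z. heatG t x z * cosh z) has_integral exp (t/2) * cosh x) UNIV"
proof -
  have eq: "heatG t x z * cosh z = exp (x + t/2) / 2 * heatG t (x + t) z + exp (-x + t/2) / 2 * heatG t (x - t) z" for z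
  proof -
    have "heatG t x z * cosh z = (heatG t x z * exp (1 * z) + heatG t x z * exp ((-1) * z)) / 2"
      by (simp add: cosh_def algebra_simps)
    also have "\<dots> = exp (x + t/2) / 2 * heatG t (x + t) z + exp (-x + t/2) / 2 * heatG t (x - t) z"
      unfolding heat_exp[OF t] by simp
    finally show ?thesis .
  qed
  have "((\<lambda>z. exp (x + t/2) / 2 * heatG t (x + t) z + exp (-x + t/2) / 2 * heatG t (x - t) z) has_integral
        (exp (x + t/2) / 2 * 1 + exp (-x + t/2) / 2 * 1)) UNIV"
    by (intro has_integral_add has_integral_mult_right heatG_int t)
  moreover have "exp (x + t/2) / 2 * 1 + exp (-x + t/2) / 2 * 1 = exp (t/2) * cosh x"
  proof -
    have "exp (x + t/2) = exp x * exp (t/2)" "exp (-x + t/2) = exp (-x) * exp (t/2)" by (simp_all add: exp_add[symmetric])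
    then show ?thesis by (simp add: cosh_field_def algebra_simps add_divide_distrib)
  qed
  ultimately show ?thesis unfolding eq by simp
qed

lemma cosh_le_exp_abs: "cosh (w::real) \<le> exp \<bar>w\<bar>"
proof -
  have a: "exp w \<le> exp \<bar>w\<bar>" and b: "exp (-w) \<le> exp \<bar>w\<bar>" by simp_all
  have "cosh w = (exp w + exp (-w)) / 2" by (simp add: cosh_field_def)
  with a b show ?thesis by argo
qed

definition Psi :: "real \<Rightarrow> real" where "Psi w = 2 * max (\<bar>w\<bar> - 1) 0 * exp \<bar>w\<bar>"

lemma Psi_nonneg: "Psi w \<ge> 0" by (simp add: Psi_def)

lemma continuous_Psi: "continuous_on UNIV Psi"
  unfolding Psi_def by (intro continuous_intros)

lemma cosh_diff_le:
  fixes a b :: real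
  assumes "0 \<le> a" "a \<le> b"
  shows "cosh b - cosh a \<le> (b - a) / 2 * exp b"
proof -
  have "exp b - exp a \<le> (b - a) * exp b"
  proof -
    have "1 + (a - b) \<le> exp (a - b)" using exp_ge_add_one_self[of "a - b"] by simp
    then have "(1 + (a - b)) * exp b \<le> exp (a - b) * exp b" by (simp add: mult_right_mono)
    then show ?thesis by (simp add: exp_diff algebra_simps)
  qed
  then have e1: "exp b - exp a \<le> b * exp b - a * exp b" by (simp add: algebra_simps)
  have e2: "exp (-b) \<le> exp (-a)" using assms by simp
  have c: "cosh b = (exp b + exp (-b)) / 2" "cosh a = (exp a + exp (-a)) / 2" by (simp_all add: cosh_field_def)
  have r: "(b - a) / 2 * exp b = (b * exp b - a * exp b) / 2" by (simp add: algebra_simps)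
  show ?thesis unfolding r c using e1 e2 by argo
qed

lemma cosh_fold:
  fixes y w :: real
  assumes y: "y \<in> {0..1}" and w: "\<bar>w\<bar> = y \<or> \<bar>w\<bar> \<ge> 2 - y"
  shows "cosh w - Psi w \<le> cosh y" and "cosh y \<le> cosh w"
proof -
  show "cosh y \<le> cosh w"
  proof -
    have "y \<le> \<bar>w\<bar>" using w y by auto
    then have "cosh y \<le> cosh \<bar>w\<bar>" using y by (subst cosh_real_nonneg_le_iff) auto
    then show ?thesis by simp
  qed
  show "cosh w - Psi w \<le> cosh y"
  proof (cases "\<bar>w\<bar> = y")
    case True
    then have "cosh w = cosh y" by (metis cosh_real_abs)
    then show ?thesis using Psi_nonneg[of w] by linarith
  next
    case False
    then have w2: "\<bar>w\<bar> \<ge> 2 - y" using w by auto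
    show ?thesis
    proof (cases "\<bar>w\<bar> \<le> 2")
      case True
      have "cosh (2 - \<bar>w\<bar>) \<le> cosh y" using w2 True y by (simp add: cosh_real_nonneg_le_iff)
      moreover have "cosh \<bar>w\<bar> - cosh (2 - \<bar>w\<bar>) \<le> (\<bar>w\<bar> - (2 - \<bar>w\<bar>)) / 2 * exp \<bar>w\<bar>"
        by (rule cosh_diff_le) (use True w2 y in auto)
      moreover have "(\<bar>w\<bar> - (2 - \<bar>w\<bar>)) / 2 * exp \<bar>w\<bar> \<le> Psi w"
        unfolding Psi_def using w2 y by (intro mult_right_mono) auto
      ultimately show ?thesis using cosh_real_abs[of w] by linarith
    next
      case False
      have "cosh w \<le> exp \<bar>w\<bar>" by (rule cosh_le_exp_abs)
      also have "\<dots> \<le> Psi w" unfolding Psi_def using False by (simp add: max_def)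
      finally show ?thesis using cosh_real_pos[of y] by linarith
    qed
  qed
qed


lemma u_exp: "(u::real) * exp (- u\<^sup>2) \<le> 1"
proof -
  have "0 \<le> (u - 1/2)\<^sup>2" by simp
  then have "u \<le> 1 + u\<^sup>2" by (simp add: power2_eq_square algebra_simps)
  also have "\<dots> \<le> exp (u\<^sup>2)" by (rule exp_ge_add_one_self)
  finally have "u \<le> exp (u\<^sup>2)" .
  then have "u * exp (- u\<^sup>2) \<le> exp (u\<^sup>2) * exp (- u\<^sup>2)" by (simp add: mult_right_mono)
  then show ?thesis by (simp add: exp_minus)
qed

lemma v_exp:
  assumes t: "t > 0" and v: "v \<ge> 0"
  shows "v * exp (- v\<^sup>2 / (8*t)) \<le> sqrt (8*t)"
proof -
  define s where "s = sqrt (8*t)"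
  have s0: "s > 0" using t by (simp add: s_def)
  have s2: "s\<^sup>2 = 8*t" using t by (simp add: s_def)
  define u where "u = v / s"
  have "(v/s)\<^sup>2 = v\<^sup>2 / (8*t)" using s2 by (simp add: power_divide)
  then have "v * exp (- v\<^sup>2 / (8*t)) = s * (u * exp (- u\<^sup>2))" using s0 by (simp add: u_def)
  also have "\<dots> \<le> s * 1" using s0 u_exp[of u] by (intro mult_left_mono) auto
  finally show ?thesis by (simp add: s_def)
qed

lemma vexp_bound:
  assumes t: "t > 0" and v: "v \<ge> 0"
  shows "v * exp v * exp (- v\<^sup>2 / (2*t)) \<le> exp t * sqrt (8*t) * exp (- v\<^sup>2 / (8*t))"
proof -
  have ex: "v + - v\<^sup>2 / (2*t) \<le> t + - v\<^sup>2 / (8*t) + - v\<^sup>2 / (8*t)"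
  proof -
    have "0 \<le> (v - 2*t)\<^sup>2" by simp
    then have "4 * t * v \<le> 4*t*t + v\<^sup>2" by (simp add: power2_eq_square algebra_simps)
    then have "4 * t * v / (8*t*t) \<le> (4*t*t + v\<^sup>2) / (8*t*t)" using t by (intro divide_right_mono) auto
    then have "v / (2*t) \<le> 1/2 + v\<^sup>2 / (8*t*t)" using t by (simp add: add_divide_distrib)
    then have "t * (v / (2*t)) \<le> t * (1/2 + v\<^sup>2 / (8*t*t))" using t by (intro mult_left_mono) auto
    then have "v / 2 \<le> t / 2 + v\<^sup>2 / (8*t)" using t by (simp add: algebra_simps)
    moreover have "v\<^sup>2 / (2*t) = 4 * (v\<^sup>2 / (8*t))" by simp
    ultimately show ?thesis by (simp add: algebra_simps)
  qed
  have "v * exp v * exp (- v\<^sup>2 / (2*t)) = v * exp (v + - v\<^sup>2 / (2*t))" by (simp only: exp_add mult.assoc)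
  also have "\<dots> \<le> v * exp (t + - v\<^sup>2 / (8*t) + - v\<^sup>2 / (8*t))"
    using ex v by (intro mult_left_mono) auto
  also have "\<dots> = exp t * (v * exp (- v\<^sup>2 / (8*t))) * exp (- v\<^sup>2 / (8*t))"
    by (simp only: exp_add mult_ac)
  also have "\<dots> \<le> exp t * sqrt (8*t) * exp (- v\<^sup>2 / (8*t))"
    using v_exp[OF t v] by (intro mult_right_mono mult_left_mono) auto
  finally show ?thesis .
qed


lemma gauss_eq: "t > 0 \<Longrightarrow> exp (- (z - c)\<^sup>2 / (8*t)) = sqrt (8*pi*t) * heatG (4*t) c z"
proof -
  assume t: "t > 0"
  have "sqrt (2 * pi * (4 * t)) = sqrt (8*pi*t)" by (simp add: mult_ac)
  moreover have "sqrt (8*pi*t) > 0" using t by simp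
  ultimately show ?thesis unfolding heatG_def using t by (simp add: power2_commute mult.assoc)
qed

lemma phi2_bound:
  assumes t: "t > 0" "t \<le> 1" and x: "x \<in> {0..1}"
  shows "heatG t x z * Psi z \<le> heatG t x 1 * (2 * exp 2 * sqrt (8*t)) * (exp (- (z - 1)\<^sup>2 / (8*t)) + exp (- (z + 1)\<^sup>2 / (8*t)))"
proof (cases "\<bar>z\<bar> \<le> 1")
  case True
  then have "Psi z = 0" by (simp add: Psi_def)
  then show ?thesis using t by (simp add: heatG_nonneg)
next
  case False
  define v where "v = \<bar>z\<bar> - 1"
  have v0: "v \<ge> 0" using False v_def by simp
  have sq: "(x - z)\<^sup>2 \<ge> (x - 1)\<^sup>2 + v\<^sup>2"
  proof (cases "z \<ge> 0")
    case True
    then have eqz: "x - z = (x - 1) - v" using v_def by simp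
    have "(x - z)\<^sup>2 = ((x - 1) - v)\<^sup>2" by (simp only: eqz)
    also have "\<dots> = (x - 1)\<^sup>2 + v\<^sup>2 + 2 * (1 - x) * v" by (simp add: power2_eq_square algebra_simps)
    finally have "(x - z)\<^sup>2 = (x - 1)\<^sup>2 + v\<^sup>2 + 2 * (1 - x) * v" .
    moreover have "2 * (1 - x) * v \<ge> 0" using x v0 by simp
    ultimately show ?thesis by simp
  next
    case False
    then have eqz: "x - z = (x + 1) + v" using v_def by simp
    have "(x - z)\<^sup>2 = ((x + 1) + v)\<^sup>2" by (simp only: eqz)
    also have "\<dots> = (x + 1)\<^sup>2 + v\<^sup>2 + 2 * (x + 1) * v" by (simp add: power2_eq_square algebra_simps)
    finally have "(x - z)\<^sup>2 = (x + 1)\<^sup>2 + v\<^sup>2 + 2 * (x + 1) * v" .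
    moreover have "2 * (x + 1) * v \<ge> 0" using x v0 by simp
    moreover have "(x + 1)\<^sup>2 \<ge> (x - 1)\<^sup>2" using x by (simp add: power2_eq_square algebra_simps)
    ultimately show ?thesis by simp
  qed
  have h: "heatG t x z \<le> heatG t x 1 * exp (- v\<^sup>2 / (2*t))"
  proof -
    have "- (x - z)\<^sup>2 / (2*t) \<le> - ((x - 1)\<^sup>2 + v\<^sup>2) / (2*t)" using sq t by (intro divide_right_mono) auto
    also have "\<dots> = - (x - 1)\<^sup>2 / (2*t) + - v\<^sup>2 / (2*t)" by (simp add: diff_divide_distrib)
    finally have "exp (- (x - z)\<^sup>2 / (2*t)) \<le> exp (- (x - 1)\<^sup>2 / (2*t)) * exp (- v\<^sup>2 / (2*t))"
      by (simp add: exp_add[symmetric])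
    then show ?thesis unfolding heatG_def using t by (simp add: divide_right_mono)
  qed
  have P: "Psi z = 2 * exp 1 * (v * exp v)"
    unfolding Psi_def v_def using False by (simp add: max_def exp_diff field_simps)
  have "heatG t x z * Psi z \<le> heatG t x 1 * exp (- v\<^sup>2 / (2*t)) * Psi z"
    by (rule mult_right_mono[OF h Psi_nonneg])
  also have "\<dots> = heatG t x 1 * (2 * exp 1) * (v * exp v * exp (- v\<^sup>2 / (2*t)))"
    unfolding P by (simp add: mult_ac)
  also have "\<dots> \<le> heatG t x 1 * (2 * exp 1) * (exp t * sqrt (8*t) * exp (- v\<^sup>2 / (8*t)))"
    by (intro mult_left_mono vexp_bound t v0) (auto simp: heatG_nonneg t)
  also have "\<dots> = heatG t x 1 * (2 * (exp 1 * exp t) * sqrt (8*t)) * exp (- v\<^sup>2 / (8*t))"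
    by (simp add: mult_ac)
  also have "\<dots> \<le> heatG t x 1 * (2 * exp 2 * sqrt (8*t)) * exp (- v\<^sup>2 / (8*t))"
  proof -
    have "exp 1 * exp t \<le> exp 2" using t by (simp add: exp_add[symmetric])
    then show ?thesis by (intro mult_right_mono mult_left_mono) (auto simp: heatG_nonneg t less_imp_le[OF t(1)])
  qed
  also have "\<dots> \<le> heatG t x 1 * (2 * exp 2 * sqrt (8*t)) * (exp (- (z - 1)\<^sup>2 / (8*t)) + exp (- (z + 1)\<^sup>2 / (8*t)))"
  proof -
    have "exp (- v\<^sup>2 / (8*t)) \<le> exp (- (z - 1)\<^sup>2 / (8*t)) + exp (- (z + 1)\<^sup>2 / (8*t))"
    proof (cases "z \<ge> 0")
      case True
      then have "v\<^sup>2 = (z - 1)\<^sup>2" using v_def by simp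
      then show ?thesis by (simp add: add_increasing2)
    next
      case False
      then have vv: "v = - (z + 1)" using v_def by simp
      have "v\<^sup>2 = (z + 1)\<^sup>2" unfolding vv by (rule power2_minus)
      then show ?thesis by (simp add: add_increasing)
    qed
    then show ?thesis by (intro mult_left_mono) (auto simp: heatG_nonneg t less_imp_le[OF t(1)])
  qed
  finally show ?thesis .
qed

definition KD :: real where "KD = 32 * exp 2 * sqrt pi"

lemma phi2_int:
  assumes t: "t > 0" "t \<le> 1" and x: "x \<in> {0..1}"
  shows "(\<lambda>z. heatG t x z * Psi z) integrable_on UNIV"
    and "integral UNIV (\<lambda>z. heatG t x z * Psi z) \<le> KD * t * heatG t x 1"
proof -
  define C where "C = heatG t x 1 * (2 * exp 2 * sqrt (8*t)) * sqrt (8*pi*t)"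
  define B where "B z = C * (heatG (4*t) 1 z + heatG (4*t) (-1) z)" for z
  have Bint: "(B has_integral C * (1 + 1)) UNIV"
    unfolding B_def using t by (intro has_integral_mult_right has_integral_add heatG_int) auto
  have le: "heatG t x z * Psi z \<le> B z" for z
  proof -
    have g1: "exp (- (z - 1)\<^sup>2 / (8*t)) = sqrt (8*pi*t) * heatG (4*t) 1 z" by (rule gauss_eq[OF t(1)])
    have g2: "exp (- (z + 1)\<^sup>2 / (8*t)) = sqrt (8*pi*t) * heatG (4*t) (-1) z" using gauss_eq[OF t(1), of z "-1"] by simp
    show ?thesis using phi2_bound[OF t x, of z] unfolding B_def C_def g1 g2 by (simp add: algebra_simps)
  qed
  have cont: "continuous_on UNIV (\<lambda>z. heatG t x z * Psi z)"
    using t by (intro continuous_intros continuous_Psi) auto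
  show i: "(\<lambda>z. heatG t x z * Psi z) integrable_on UNIV"
  proof (rule integrable_on_all_intervals_integrable_bound[where g=B])
    show "(\<lambda>z. if z \<in> UNIV then heatG t x z * Psi z else 0) integrable_on cbox a b" for a b
    proof -
      have "(\<lambda>z. if z \<in> UNIV then heatG t x z * Psi z else 0) = (\<lambda>z. heatG t x z * Psi z)" by simp
      then show ?thesis using continuous_on_subset[OF cont] by (simp add: integrable_continuous_interval)
    qed
    show "norm (heatG t x z * Psi z) \<le> B z" for z
      using le[of z] by (simp add: heatG_nonneg[OF t(1)] Psi_nonneg)
    show "B integrable_on UNIV" using Bint by blast
  qed
  have "integral UNIV (\<lambda>z. heatG t x z * Psi z) \<le> integral UNIV B"
    by (rule integral_le[OF i]) (use Bint le in auto)
  also have "integral UNIV B = C * 2" using Bint by (simp add: integral_unique)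
  also have "C * 2 = KD * t * heatG t x 1"
  proof -
    have "sqrt (8*t) * sqrt (8*pi*t) = 8 * t * sqrt pi"
    proof -
      have "sqrt (8*t) * sqrt (8*pi*t) = sqrt ((8*t)\<^sup>2 * pi)" by (simp add: real_sqrt_mult[symmetric] power2_eq_square mult_ac)
      also have "\<dots> = 8 * t * sqrt pi" using t by (simp add: real_sqrt_mult)
      finally show ?thesis .
    qed
    then show ?thesis unfolding C_def KD_def by (simp add: mult_ac)
  qed
  finally show "integral UNIV (\<lambda>z. heatG t x z * Psi z) \<le> KD * t * heatG t x 1" .
qed


lemma T_cont: "t > 0 \<Longrightarrow> continuous_on S (\<lambda>y. T t x y k)"
  unfolding T_def by (intro continuous_intros) auto

lemma G_mass:
  assumes t: "t > 0" and x: "x \<in> {0..1}"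
  shows "((\<lambda>y. Gneum t x y) has_integral 1) {0..1}"
proof -
  have "((\<lambda>y. \<Sum>\<^sub>\<infinity>k. T t x y k) has_integral 1) {0..1}"
  proof (rule L_MC)
    show "continuous_on {0..1} (\<lambda>y. T t x y k)" for k by (rule T_cont[OF t])
    show "0 \<le> T t x y k" for k y by (rule T_nonneg[OF t])
    show "(\<lambda>k. T t x y k) summable_on UNIV" if "y \<in> {0..1}" for y using T_summable[OF t x that] by simp
    have "((\<lambda>k::int. integral {0..1} (\<lambda>y. heatG t x (2 * of_int k + y) + heatG t x (2 * of_int k - y))) has_sum integral UNIV (heatG t x)) UNIV"
      by (rule unfold_has_sum) (auto intro!: continuous_intros simp: t heatG_nonneg has_integral_integrable[OF heatG_int[OF t]])
    moreover have "integral UNIV (heatG t x) = 1" using heatG_int[OF t] by (rule integral_unique)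
    ultimately show "((\<lambda>k. integral {0..1} (\<lambda>y. T t x y k)) has_sum 1) UNIV" by (simp add: T_def)
  qed
  then show ?thesis by (simp add: Gneum_T)
qed

lemma w_cond1:
  fixes k :: int and y :: real
  assumes y: "y \<in> {0..1}"
  shows "\<bar>2 * of_int k + y\<bar> = y \<or> \<bar>2 * of_int k + y\<bar> \<ge> 2 - y"
proof -
  consider "k = 0" | "(of_int k::real) \<ge> 1" | "(of_int k::real) \<le> -1" by linarith
  then show ?thesis using y by cases (auto simp: abs_if)
qed

lemma w_cond2:
  fixes k :: int and y :: real
  assumes y: "y \<in> {0..1}"
  shows "\<bar>2 * of_int k - y\<bar> = y \<or> \<bar>2 * of_int k - y\<bar> \<ge> 2 - y"
proof -
  consider "k = 0" | "(of_int k::real) \<ge> 1" | "(of_int k::real) \<le> -1" by linarith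
  then show ?thesis using y by cases (auto simp: abs_if)
qed

lemma G_cosh:
  assumes t: "t > 0" "t \<le> 1" and x: "x \<in> {0..1}"
  shows "(\<lambda>y. Gneum t x y * cosh y) integrable_on {0..1}"
    and "integral {0..1} (\<lambda>y. Gneum t x y * cosh y) \<ge> exp (t/2) * cosh x - KD * t * heatG t x 1"
proof -
  define \<phi>1 where "\<phi>1 z = heatG t x z * cosh z" for z
  define \<phi>2 where "\<phi>2 z = heatG t x z * Psi z" for z
  define A where "A k = integral {0..1} (\<lambda>y. \<phi>1 (2 * of_int k + y) + \<phi>1 (2 * of_int k - y))" for k :: int
  define B where "B k = integral {0..1} (\<lambda>y. \<phi>2 (2 * of_int k + y) + \<phi>2 (2 * of_int k - y))" for k :: int
  define f where "f k y = T t x y k * cosh y" for k y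
  have c1: "continuous_on UNIV \<phi>1" unfolding \<phi>1_def using t by (intro continuous_intros) auto
  have c2: "continuous_on UNIV \<phi>2" unfolding \<phi>2_def using t by (intro continuous_intros continuous_Psi) auto
  have n1: "\<phi>1 z \<ge> 0" for z unfolding \<phi>1_def using t by (simp add: heatG_nonneg)
  have n2: "\<phi>2 z \<ge> 0" for z unfolding \<phi>2_def using t by (simp add: heatG_nonneg Psi_nonneg)
  have i1: "(\<phi>1 has_integral exp (t/2) * cosh x) UNIV" unfolding \<phi>1_def by (rule heat_cosh_int[OF t(1)])
  have int1: "\<phi>1 integrable_on UNIV" using i1 by blast
  have e1: "integral UNIV \<phi>1 = exp (t/2) * cosh x" using i1 by (rule integral_unique)
  have hA: "(A has_sum (exp (t/2) * cosh x)) UNIV"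
    unfolding A_def e1[symmetric] by (rule unfold_has_sum[OF c1 n1 int1])
  have int2: "\<phi>2 integrable_on UNIV" unfolding \<phi>2_def by (rule phi2_int(1)[OF t x])
  have hB: "(B has_sum integral UNIV \<phi>2) UNIV"
    unfolding B_def by (rule unfold_has_sum[OF c2 n2 int2])
  have cf: "continuous_on {0..1} (f k)" for k
    unfolding f_def using t by (intro continuous_intros T_cont) auto
  have hint: "(\<lambda>y. g (2 * of_int k + y) + g (2 * of_int k - y)) integrable_on {0..1}"
    if cg: "continuous_on UNIV g" for k and g :: "real \<Rightarrow> real"
  proof -
    have a: "continuous_on {0..1} (\<lambda>y. g (2 * of_int k + y))"
      by (rule continuous_on_compose2[OF cg]) (auto intro!: continuous_intros)
    have b: "continuous_on {0..1} (\<lambda>y. g (2 * of_int k - y))"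
      by (rule continuous_on_compose2[OF cg]) (auto intro!: continuous_intros)
    show ?thesis by (rule integrable_continuous_interval[OF continuous_on_add[OF a b]])
  qed
  have up: "f k y \<le> \<phi>1 (2 * of_int k + y) + \<phi>1 (2 * of_int k - y)" if y: "y \<in> {0..1}" for k y
  proof -
    have "heatG t x (2 * of_int k + y) * cosh y \<le> heatG t x (2 * of_int k + y) * cosh (2 * of_int k + y)"
      using cosh_fold(2)[OF y w_cond1[OF y]] t by (intro mult_left_mono) (auto simp: heatG_nonneg)
    moreover have "heatG t x (2 * of_int k - y) * cosh y \<le> heatG t x (2 * of_int k - y) * cosh (2 * of_int k - y)"
      using cosh_fold(2)[OF y w_cond2[OF y]] t by (intro mult_left_mono) (auto simp: heatG_nonneg)
    ultimately show ?thesis unfolding f_def T_def \<phi>1_def by (simp add: algebra_simps)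
  qed
  have lo: "(\<phi>1 (2 * of_int k + y) - \<phi>2 (2 * of_int k + y)) + (\<phi>1 (2 * of_int k - y) - \<phi>2 (2 * of_int k - y)) \<le> f k y"
    if y: "y \<in> {0..1}" for k y
  proof -
    have "heatG t x (2 * of_int k + y) * (cosh (2 * of_int k + y) - Psi (2 * of_int k + y)) \<le> heatG t x (2 * of_int k + y) * cosh y"
      using cosh_fold(1)[OF y w_cond1[OF y]] t by (intro mult_left_mono) (auto simp: heatG_nonneg)
    moreover have "heatG t x (2 * of_int k - y) * (cosh (2 * of_int k - y) - Psi (2 * of_int k - y)) \<le> heatG t x (2 * of_int k - y) * cosh y"
      using cosh_fold(1)[OF y w_cond2[OF y]] t by (intro mult_left_mono) (auto simp: heatG_nonneg)
    ultimately show ?thesis unfolding f_def T_def \<phi>1_def \<phi>2_def by (simp add: algebra_simps)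
  qed
  define F where "F k = integral {0..1} (f k)" for k
  have fint: "f k integrable_on {0..1}" for k by (rule integrable_continuous_interval[OF cf])
  have FA: "F k \<le> A k" for k
    unfolding F_def A_def by (rule integral_le[OF fint hint[OF c1]]) (rule up)
  have FAB: "A k - B k \<le> F k" for k
  proof -
    have i1k: "(\<lambda>y. \<phi>1 (2 * of_int k + y) + \<phi>1 (2 * of_int k - y)) integrable_on {0..1}" by (rule hint[OF c1])
    have i2k: "(\<lambda>y. \<phi>2 (2 * of_int k + y) + \<phi>2 (2 * of_int k - y)) integrable_on {0..1}" by (rule hint[OF c2])
    have "A k - B k = integral {0..1} (\<lambda>y. (\<phi>1 (2 * of_int k + y) + \<phi>1 (2 * of_int k - y)) - (\<phi>2 (2 * of_int k + y) + \<phi>2 (2 * of_int k - y)))"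
      unfolding A_def B_def by (rule integral_diff[symmetric, OF i1k i2k])
    also have "\<dots> \<le> F k" unfolding F_def
    proof (rule integral_le[OF integrable_diff[OF i1k i2k] fint])
      fix y :: real assume y: "y \<in> {0..1}"
      show "(\<phi>1 (2 * of_int k + y) + \<phi>1 (2 * of_int k - y)) - (\<phi>2 (2 * of_int k + y) + \<phi>2 (2 * of_int k - y)) \<le> f k y"
        using lo[OF y, of k] by linarith
    qed
    finally show ?thesis .
  qed
  have Fnn: "F k \<ge> 0" for k
    unfolding F_def f_def by (rule integral_nonneg) (use fint[unfolded f_def] T_nonneg[OF t(1)] in \<open>auto intro!: mult_nonneg_nonneg\<close>)
  have Fs: "F summable_on UNIV"
    by (rule summable_on_comparison_test[OF has_sum_imp_summable[OF hA]]) (use FA Fnn in auto)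
  have main: "((\<lambda>y. \<Sum>\<^sub>\<infinity>k. f k y) has_integral infsum F UNIV) {0..1}"
  proof (rule L_MC[OF cf])
    show "0 \<le> f k y" if "y \<in> {0..1}" for k y unfolding f_def using T_nonneg[OF t(1)] by simp
    show "(\<lambda>k. f k y) summable_on UNIV" if "y \<in> {0..1}" for y
      unfolding f_def by (rule summable_on_cmult_left) (rule T_summable[OF t(1) x that])
    show "((\<lambda>k. integral {0..1} (f k)) has_sum infsum F UNIV) UNIV" using Fs by (simp add: F_def[symmetric])
  qed
  have eqf: "(\<Sum>\<^sub>\<infinity>k. f k y) = Gneum t x y * cosh y" for y
    unfolding f_def Gneum_T by (rule infsum_cmult_left')
  have main': "((\<lambda>y. Gneum t x y * cosh y) has_integral infsum F UNIV) {0..1}" using main by (simp add: eqf)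
  then show "(\<lambda>y. Gneum t x y * cosh y) integrable_on {0..1}" by blast
  have hBm: "((\<lambda>k. - B k) has_sum (- integral UNIV \<phi>2)) UNIV"
    using has_sum_uminus[of B UNIV "- integral UNIV \<phi>2"] hB by simp
  have hAB0: "((\<lambda>k. A k + - B k) has_sum (exp (t/2) * cosh x + - integral UNIV \<phi>2)) UNIV"
    by (rule has_sum_add[OF hA hBm])
  have hAB: "((\<lambda>k. A k - B k) has_sum (exp (t/2) * cosh x - integral UNIV \<phi>2)) UNIV"
    using hAB0 by (simp only: diff_conv_add_uminus)
  have "exp (t/2) * cosh x - integral UNIV \<phi>2 \<le> infsum F UNIV"
    by (rule has_sum_mono[OF hAB has_sum_infsum[OF Fs]]) (rule FAB)
  moreover have "integral UNIV \<phi>2 \<le> KD * t * heatG t x 1" unfolding \<phi>2_def by (rule phi2_int(2)[OF t x])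
  moreover have "integral {0..1} (\<lambda>y. Gneum t x y * cosh y) = infsum F UNIV" using main' by (rule integral_unique)
  ultimately show "integral {0..1} (\<lambda>y. Gneum t x y * cosh y) \<ge> exp (t/2) * cosh x - KD * t * heatG t x 1" by linarith
qed


lemma kpow_1: "kpow gd (Suc 0) = gd" by (simp add: kpow_def)

lemma kpow_Suc: "n \<ge> 1 \<Longrightarrow> kpow gd (Suc n) = kcomp gd (kpow gd n)"
  by (cases n) (auto simp: kpow_def)

context
  fixes A \<delta> :: real
  assumes d: "\<delta> > 0" "\<delta> \<le> 1" and A: "A > 0" and R0: "1 - A * \<delta> \<ge> 0"
begin

abbreviation "Rd \<equiv> 1 - A * \<delta>"
abbreviation "gd \<equiv> g0 A \<delta>"

lemma R1: "Rd \<le> 1" using A d by simp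

lemma kpow_vanish:
  assumes "n \<ge> 1" "x \<notin> {0..Rd} \<or> y \<notin> {0..Rd}"
  shows "kpow gd n x y = 0"
  using assms
proof (induction n arbitrary: x y rule: nat_induct_at_least)
  case base then show ?case by (auto simp: kpow_1 g0_def)
next
  case (Suc n)
  show ?case
  proof (cases "x \<in> {0..Rd}")
    case False
    then have "gd x s = 0" for s by (auto simp: g0_def)
    then show ?thesis using Suc.hyps by (simp add: kpow_Suc kcomp_def)
  next
    case True
    then have "y \<notin> {0..Rd}" using Suc.prems by simp
    then have "kpow gd n s y = 0" for s using Suc.IH by blast
    then show ?thesis using Suc.hyps by (simp add: kpow_Suc kcomp_def)
  qed
qed

lemma int_restrict:
  fixes f :: "real \<Rightarrow> real"
  assumes "\<And>s. s \<in> {0..1} \<Longrightarrow> s \<notin> {0..Rd} \<Longrightarrow> f s = 0"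
  shows "integral {0..1} f = integral {0..Rd} f"
proof -
  have "integral {0..1} f = integral {0..1} (\<lambda>s. if s \<in> {0..Rd} then f s else 0)"
    by (rule Henstock_Kurzweil_Integration.integral_cong) (use assms in auto)
  also have "\<dots> = integral ({0..Rd} \<inter> {0..1}) f"
    using Henstock_Kurzweil_Integration.integral_restrict_Int[of "{0..1}" "{0..Rd}" f] by simp
  also have "{0..Rd} \<inter> {0..1} = {0..Rd}" using R1 by auto
  finally show ?thesis .
qed

lemma kpow_Suc_R:
  assumes n: "n \<ge> 1" and x: "x \<in> {0..Rd}"
  shows "kpow gd (Suc n) x y = integral {0..Rd} (\<lambda>s. Gneum \<delta> x s * kpow gd n s y)"
proof -
  have "kpow gd (Suc n) x y = integral {0..1} (\<lambda>s. gd x s * kpow gd n s y)"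
    using n by (simp add: kpow_Suc kcomp_def)
  also have "\<dots> = integral {0..Rd} (\<lambda>s. gd x s * kpow gd n s y)"
    by (rule int_restrict) (simp add: g0_def)
  also have "\<dots> = integral {0..Rd} (\<lambda>s. Gneum \<delta> x s * kpow gd n s y)"
    by (rule Henstock_Kurzweil_Integration.integral_cong) (use x in \<open>simp add: g0_def\<close>)
  finally show ?thesis .
qed

lemma G_cont_R: "continuous_on ({0..Rd}\<times>{0..Rd}) (\<lambda>p. Gneum \<delta> (fst p) (snd p))"
  by (rule continuous_on_subset[OF G_cont[OF d(1)]]) (use R1 in auto)

lemma kpow_cont:
  assumes "n \<ge> 1"
  shows "continuous_on ({0..Rd}\<times>{0..Rd}) (\<lambda>p. kpow gd n (fst p) (snd p))"
  using assms
proof (induction n rule: nat_induct_at_least)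
  case base
  show ?case
    by (rule continuous_on_eq[OF G_cont_R]) (auto simp: kpow_1 g0_def)
next
  case (Suc n)
  let ?F = "\<lambda>(p::real\<times>real) s. Gneum \<delta> (fst p) s * kpow gd n s (snd p)"
  have c: "continuous_on (({0..Rd}\<times>{0..Rd}) \<times> cbox 0 Rd) (\<lambda>(p, s). ?F p s)"
  proof -
    have c1: "continuous_on (({0..Rd}\<times>{0..Rd}) \<times> cbox 0 Rd) (\<lambda>q. Gneum \<delta> (fst (fst q)) (snd q))"
      by (rule continuous_on_compose2[OF G_cont_R, where f="\<lambda>q. (fst (fst q), snd q)", simplified])
         (auto intro!: continuous_intros)
    have c2: "continuous_on (({0..Rd}\<times>{0..Rd}) \<times> cbox 0 Rd) (\<lambda>q. kpow gd n (snd q) (snd (fst q)))"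
      by (rule continuous_on_compose2[OF Suc.IH, where f="\<lambda>q. (snd q, snd (fst q))", simplified])
         (auto intro!: continuous_intros)
    show ?thesis using continuous_on_mult[OF c1 c2] by (simp add: case_prod_beta)
  qed
  have "continuous_on ({0..Rd}\<times>{0..Rd}) (\<lambda>p. integral (cbox 0 Rd) (?F p))"
    by (rule integral_continuous_on_param[OF c])
  then show ?case
    by (rule continuous_on_eq) (use Suc.hyps in \<open>auto simp: kpow_Suc_R\<close>)
qed

definition M :: "nat \<Rightarrow> real \<Rightarrow> real" where
  "M n x = integral {0..1} (\<lambda>y. kpow gd n x y)"

lemma M_R: "n \<ge> 1 \<Longrightarrow> M n x = integral {0..Rd} (\<lambda>y. kpow gd n x y)"
  unfolding M_def by (rule int_restrict) (simp add: kpow_vanish)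

lemma M_cont:
  assumes "n \<ge> 1"
  shows "continuous_on {0..Rd} (M n)"
proof -
  have c: "continuous_on ({0..Rd} \<times> cbox 0 Rd) (\<lambda>(x, y). kpow gd n x y)"
    using kpow_cont[OF assms] by (simp add: case_prod_beta)
  have "continuous_on {0..Rd} (\<lambda>x. integral (cbox 0 Rd) (kpow gd n x))"
    by (rule integral_continuous_on_param[OF c])
  then show ?thesis by (rule continuous_on_eq) (simp add: M_R[OF assms])
qed

lemma M_Suc:
  assumes n: "n \<ge> 1" and x: "x \<in> {0..Rd}"
  shows "M (Suc n) x = integral {0..Rd} (\<lambda>s. Gneum \<delta> x s * M n s)"
proof -
  have cG: "continuous_on {0..Rd} (\<lambda>s. Gneum \<delta> x s)"
    by (rule continuous_on_compose2[OF G_cont_R, where f="\<lambda>s. (x, s)", simplified]) (use x in \<open>auto intro!: continuous_intros\<close>)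
  have ck: "continuous_on (cbox (0,0) (Rd,Rd)) (\<lambda>(s, y). Gneum \<delta> x s * kpow gd n s y)"
  proof -
    have c1: "continuous_on ({0..Rd}\<times>{0..Rd}) (\<lambda>q. Gneum \<delta> x (fst q))"
      by (rule continuous_on_compose2[OF cG]) (auto intro!: continuous_intros)
    show ?thesis using continuous_on_mult[OF c1 kpow_cont[OF n]] by (simp add: case_prod_beta cbox_Pair_eq)
  qed
  have "M (Suc n) x = integral {0..Rd} (\<lambda>y. integral {0..Rd} (\<lambda>s. Gneum \<delta> x s * kpow gd n s y))"
    using n x by (simp add: M_R kpow_Suc_R)
  also have "\<dots> = integral {0..Rd} (\<lambda>s. integral {0..Rd} (\<lambda>y. Gneum \<delta> x s * kpow gd n s y))"
    using integral_swap_continuous[OF ck] by simp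
  also have "\<dots> = integral {0..Rd} (\<lambda>s. Gneum \<delta> x s * M n s)"
    by (rule Henstock_Kurzweil_Integration.integral_cong) (simp add: M_R[OF n])
  finally show ?thesis .
qed

end


lemma e_bounds: "exp 1 \<le> (2.7183::real)" "exp 1 \<ge> (2.718::real)"
proof -
  have h: "\<bar>exp 1 - 5837465777 / 2147483648\<bar> \<le> (inverse (2 ^ 32)::real)" by (rule e_approx_32)
  have a: "exp 1 \<le> 5837465777 / 2147483648 + (inverse (2 ^ 32)::real)" using h by (simp only: abs_le_iff) linarith
  have b: "exp 1 \<ge> 5837465777 / 2147483648 - (inverse (2 ^ 32)::real)" using h by (simp only: abs_le_iff) linarith
  show "exp 1 \<le> (2.7183::real)" using a by simp
  show "exp 1 \<ge> (2.718::real)" using b by simp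
qed

lemma cosh1_le: "cosh (1::real) \<le> 1.5432"
proof -
  have e: "cosh (1::real) = (exp 1 + inverse (exp 1)) / 2" by (simp add: cosh_field_def exp_minus)
  have "inverse (exp 1) \<le> inverse (2.718::real)" using e_bounds(2) by (intro le_imp_inverse_le) auto
  then show ?thesis unfolding e using e_bounds(1) by simp
qed

lemma exp_half_ge: "exp (1/2::real) \<ge> 1.5625"
  using exp_ge_one_plus_x_over_n_power_n[of 2 "1/2"] by (simp add: power2_eq_square)

lemma exp_half_le: "exp (t/2::real) \<le> 2" if "t \<le> 1"
proof -
  have "exp (t/2) \<le> exp (1/2)" using that by simp
  also have "exp (1/2::real) = sqrt (exp 1)"
  proof -
    have "exp (1::real) = (exp (1/2))\<^sup>2" by (simp add: power2_eq_square exp_add[symmetric])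
    then show ?thesis by simp
  qed
  also have "\<dots> \<le> sqrt 4" using e_bounds(1) by (subst real_sqrt_le_iff) simp
  finally show ?thesis by simp
qed

lemma cosh_le2: "y \<in> {0..1} \<Longrightarrow> cosh (y::real) \<le> 2"
proof -
  assume y: "y \<in> {0..1}"
  have "cosh y \<le> cosh 1" using y by (subst cosh_real_nonneg_le_iff) auto
  then show ?thesis using cosh1_le by simp
qed

definition W :: "real \<Rightarrow> real \<Rightarrow> real \<Rightarrow> real" where
  "W c t y = c * (exp (t/2) * cosh y - cosh 1)"

context
  fixes A \<delta> :: real
  assumes d: "\<delta> > 0" "\<delta> \<le> 1" and A: "A > 0" and R0: "1 - A * \<delta> \<ge> 0"
begin

lemma STEP:
  assumes x: "x \<in> {0..1 - A * \<delta>}" and t: "0 \<le> t" "t \<le> 1"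
    and c: "0 < c" "c \<le> 1/8" "c * KD \<le> A/4"
    and mc: "continuous_on {0..1 - A * \<delta>} m"
    and ml: "\<And>s. s \<in> {0..1 - A * \<delta>} \<Longrightarrow> m s \<le> 1 - W c t s"
  shows "integral {0..1 - A * \<delta>} (\<lambda>s. Gneum \<delta> x s * m s) \<le> 1 - W c (t + \<delta>) x"
proof -
  define R where "R = 1 - A * \<delta>"
  have R1: "R \<le> 1" and R0': "0 \<le> R" using A d R0 by (simp_all add: R_def)
  have x1: "x \<in> {0..1}" using x R1 by (auto simp: R_def)
  define h where "h = heatG \<delta> x 1"
  have h0: "h \<ge> 0" unfolding h_def using d by (simp add: heatG_nonneg)
  define F where "F s = 1 - W c t s" for s
  have cG: "continuous_on {0..1} (\<lambda>s. Gneum \<delta> x s)"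
    by (rule continuous_on_compose2[OF G_cont[OF d(1)], where f="\<lambda>s. (x, s)", simplified])
       (use x1 in \<open>auto intro!: continuous_intros\<close>)
  have cF: "continuous_on UNIV F" unfolding F_def W_def by (intro continuous_intros)
  have cGF: "continuous_on {0..1} (\<lambda>s. Gneum \<delta> x s * F s)"
    by (intro continuous_on_mult cG continuous_on_subset[OF cF]) auto
  have Gnn: "Gneum \<delta> x s \<ge> 0" if "s \<in> {0..1}" for s using G_nonneg[OF d(1) x1 that] .
  have s1: "integral {0..R} (\<lambda>s. Gneum \<delta> x s * m s) \<le> integral {0..R} (\<lambda>s. Gneum \<delta> x s * F s)"
  proof (rule integral_le)
    show "(\<lambda>s. Gneum \<delta> x s * m s) integrable_on {0..R}"
      by (rule integrable_continuous_interval, intro continuous_on_mult continuous_on_subset[OF cG])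
         (use R1 mc in \<open>auto simp: R_def\<close>)
    show "(\<lambda>s. Gneum \<delta> x s * F s) integrable_on {0..R}"
      by (rule integrable_continuous_interval, rule continuous_on_subset[OF cGF]) (use R1 in auto)
    show "Gneum \<delta> x s * m s \<le> Gneum \<delta> x s * F s" if "s \<in> {0..R}" for s
      using ml[of s] that Gnn[of s] R1 unfolding F_def R_def by (intro mult_left_mono) auto
  qed
  have iGF: "(\<lambda>s. Gneum \<delta> x s * F s) integrable_on {0..1}" by (rule integrable_continuous_interval[OF cGF])
  have split: "integral {0..R} (\<lambda>s. Gneum \<delta> x s * F s) + integral {R..1} (\<lambda>s. Gneum \<delta> x s * F s)
      = integral {0..1} (\<lambda>s. Gneum \<delta> x s * F s)"
    by (rule Henstock_Kurzweil_Integration.integral_combine[OF R0' R1 iGF])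
  have gm: "((\<lambda>s. Gneum \<delta> x s) has_integral 1) {0..1}" by (rule G_mass[OF d(1) x1])
  obtain J where gc: "((\<lambda>s. Gneum \<delta> x s * cosh s) has_integral J) {0..1}"
    and J: "J \<ge> exp (\<delta>/2) * cosh x - KD * \<delta> * h"
    using G_cosh[OF d x1] unfolding h_def by (metis has_integral_integrable_integral)
  have eqF: "Gneum \<delta> x s * F s = (1 + c * cosh 1) * Gneum \<delta> x s - (c * exp (t/2)) * (Gneum \<delta> x s * cosh s)" for s
    unfolding F_def W_def by (simp add: algebra_simps)
  have whole: "integral {0..1} (\<lambda>s. Gneum \<delta> x s * F s) = (1 + c * cosh 1) * 1 - (c * exp (t/2)) * J"
    unfolding eqF by (intro integral_unique has_integral_diff has_integral_mult_right gm gc)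
  have tail: "integral {R..1} (\<lambda>s. Gneum \<delta> x s * F s) \<ge> (1 - R) * (h / 2)"
  proof -
    have "integral {R..1} (\<lambda>s. h / 2) \<le> integral {R..1} (\<lambda>s. Gneum \<delta> x s * F s)"
    proof (rule integral_le)
      show "(\<lambda>s. h / 2) integrable_on {R..1}" by (intro integrable_continuous_interval continuous_intros)
      show "(\<lambda>s. Gneum \<delta> x s * F s) integrable_on {R..1}"
        by (rule integrable_continuous_interval, rule continuous_on_subset[OF cGF]) (use R0' in auto)
      show "h / 2 \<le> Gneum \<delta> x s * F s" if s: "s \<in> {R..1}" for s
      proof -
        have s1: "s \<in> {0..1}" using s R0' by auto
        have "W c t s \<le> c * (2 * 2)"
        proof -
          have "exp (t/2) * cosh s \<le> 2 * 2"
            using exp_half_le[OF t(2)] cosh_le2[OF s1] by (intro mult_mono) auto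
          then have "exp (t/2) * cosh s - cosh 1 \<le> 2 * 2" using cosh_real_pos[of 1] by linarith
          then show ?thesis unfolding W_def using c(1) by (intro mult_left_mono) auto
        qed
        then have F2: "F s \<ge> 1/2" unfolding F_def using c by linarith
        have "h \<le> heatG \<delta> x s" unfolding h_def
          by (rule heatG_mono[OF d(1)]) (use s x R_def in auto)
        also have "\<dots> \<le> Gneum \<delta> x s" by (rule G_ge_heat[OF d(1) x1 s1])
        finally have "h / 2 \<le> Gneum \<delta> x s * (1/2)" by simp
        also have "\<dots> \<le> Gneum \<delta> x s * F s" using F2 Gnn[OF s1] by (intro mult_left_mono) auto
        finally show ?thesis .
      qed
    qed
    moreover have "integral {R..1} (\<lambda>s. h / 2) = (1 - R) * (h / 2)" using R1 by simp
    ultimately show ?thesis by linarith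
  qed
  have "integral {0..R} (\<lambda>s. Gneum \<delta> x s * m s) \<le> (1 + c * cosh 1) - (c * exp (t/2)) * J - (1 - R) * (h / 2)"
    using s1 split whole tail by argo
  also have "\<dots> \<le> (1 + c * cosh 1) - (c * exp (t/2)) * (exp (\<delta>/2) * cosh x - KD * \<delta> * h) - (1 - R) * (h / 2)"
    using J c(1) by (simp add: mult_left_mono)
  also have "\<dots> = 1 - W c (t + \<delta>) x + \<delta> * h * (c * exp (t/2) * KD - A / 2)"
    unfolding W_def R_def by (simp add: algebra_simps exp_add[symmetric] add_divide_distrib)
  also have "\<dots> \<le> 1 - W c (t + \<delta>) x"
  proof -
    have "c * exp (t/2) * KD \<le> c * 2 * KD"
      using exp_half_le[OF t(2)] c(1) by (intro mult_right_mono mult_left_mono) (auto simp: KD_def)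
    also have "\<dots> \<le> A / 2" using c(3) by simp
    finally have "c * exp (t/2) * KD - A / 2 \<le> 0" by simp
    moreover have "\<delta> * h \<ge> 0" using d h0 by simp
    ultimately show ?thesis by (simp add: mult_nonneg_nonpos)
  qed
  finally show ?thesis unfolding R_def .
qed

lemma M_bound:
  assumes c: "0 < c" "c \<le> 1/8" "c * KD \<le> A/4"
    and N: "\<delta> * (real N - 1) < 1"
  shows "n \<ge> 1 \<Longrightarrow> n \<le> N \<Longrightarrow> \<forall>s\<in>{0..1 - A * \<delta>}. M A \<delta> n s \<le> 1 - W c (real n * \<delta>) s"
proof (induction n rule: nat_induct_at_least)
  case base
  show ?case
  proof
    fix s assume s: "s \<in> {0..1 - A * \<delta>}"
    have "M A \<delta> 1 s = integral {0..1 - A * \<delta>} (\<lambda>y. kpow (g0 A \<delta>) 1 s y)"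
      using M_R[OF d A R0, of 1 s] by simp
    also have "\<dots> = integral {0..1 - A * \<delta>} (\<lambda>y. Gneum \<delta> s y * 1)"
      by (rule Henstock_Kurzweil_Integration.integral_cong) (use s in \<open>simp add: kpow_1 g0_def\<close>)
    also have "\<dots> \<le> 1 - W c (0 + \<delta>) s"
    proof (rule STEP[OF s order_refl zero_le_one c])
      show "continuous_on {0..1 - A * \<delta>} (\<lambda>_. 1::real)" by simp
      show "1 \<le> 1 - W c 0 u" if u: "u \<in> {0..1 - A * \<delta>}" for u
      proof -
        have Ad: "A * \<delta> > 0" using A d by simp
        have u1: "u \<le> 1" "0 \<le> u" using u Ad by auto
        have "cosh u \<le> cosh 1" using u1 by (subst cosh_real_nonneg_le_iff) auto
        then show ?thesis unfolding W_def using c(1) by (simp add: mult_nonneg_nonpos)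
      qed
    qed
    finally show "M A \<delta> 1 s \<le> 1 - W c (real 1 * \<delta>) s" by simp
  qed
next
  case (Suc n)
  have nd: "real n * \<delta> \<le> 1"
  proof -
    have "real n \<le> real N - 1" using Suc.prems by simp
    then have "real n * \<delta> \<le> (real N - 1) * \<delta>" using d by (simp add: mult_right_mono)
    then show ?thesis using N by (simp add: mult.commute)
  qed
  have IH: "\<forall>s\<in>{0..1 - A * \<delta>}. M A \<delta> n s \<le> 1 - W c (real n * \<delta>) s" using Suc by simp
  show ?case
  proof
    fix s assume s: "s \<in> {0..1 - A * \<delta>}"
    have "M A \<delta> (Suc n) s = integral {0..1 - A * \<delta>} (\<lambda>u. Gneum \<delta> s u * M A \<delta> n u)"
      by (rule M_Suc[OF d A R0 Suc.hyps s])
    also have "\<dots> \<le> 1 - W c (real n * \<delta> + \<delta>) s"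
      by (rule STEP[OF s _ nd c M_cont[OF d A R0 Suc.hyps]]) (use IH d in auto)
    finally show "M A \<delta> (Suc n) s \<le> 1 - W c (real (Suc n) * \<delta>) s" by (simp add: algebra_simps)
  qed
qed

end

theorem lemma3p4:
  fixes A :: real
  assumes "A > 0"
  shows "\<exists>a>0. \<forall>\<^sub>F \<delta> in at_right (0::real). \<forall>N::nat.
           (\<delta> * (real N - 1) < 1 \<and> 1 \<le> \<delta> * real N) \<longrightarrow>
           (\<forall>r\<in>{0..1 - A*\<delta>}. integral {0..1} (\<lambda>r'. kpow (g0 A \<delta>) N r r') \<le> 1 - a)"
proof -
  define c where "c = min (1/8) (A / (4 * KD))"
  have KD0: "KD > 0" by (simp add: KD_def)
  have c: "0 < c" "c \<le> 1/8" "c * KD \<le> A/4"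
    using assms KD0 by (auto simp: c_def min_def field_simps)
  define a where "a = c * (exp (1/2) - cosh 1)"
  have a0: "a > 0" unfolding a_def using c(1) exp_half_ge cosh1_le by simp
  have ev: "\<forall>\<^sub>F \<delta> in at_right (0::real). \<delta> > 0 \<and> \<delta> \<le> 1 \<and> 1 - A * \<delta> \<ge> 0"
    unfolding eventually_at_right_field
    by (rule exI[of _ "min 1 (1/A)"]) (use assms in \<open>auto simp: field_simps\<close>)
  show ?thesis
  proof (intro exI[of _ a] conjI a0)
    show "\<forall>\<^sub>F \<delta> in at_right (0::real). \<forall>N::nat.
           (\<delta> * (real N - 1) < 1 \<and> 1 \<le> \<delta> * real N) \<longrightarrow>
           (\<forall>r\<in>{0..1 - A*\<delta>}. integral {0..1} (\<lambda>r'. kpow (g0 A \<delta>) N r r') \<le> 1 - a)"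
      using ev
    proof eventually_elim
      case (elim \<delta>)
      then have d: "\<delta> > 0" "\<delta> \<le> 1" and R0: "1 - A * \<delta> \<ge> 0" by auto
      show ?case
      proof (intro allI impI ballI)
        fix N :: nat and r
        assume N: "\<delta> * (real N - 1) < 1 \<and> 1 \<le> \<delta> * real N" and r: "r \<in> {0..1 - A*\<delta>}"
        have N1: "N \<ge> 1"
        proof (rule ccontr)
          assume "\<not> N \<ge> 1" then have "N = 0" by simp
          then show False using N by simp
        qed
        have "integral {0..1} (\<lambda>r'. kpow (g0 A \<delta>) N r r') = M A \<delta> N r" by (simp add: M_def[OF d assms R0])
        also have "\<dots> \<le> 1 - W c (real N * \<delta>) r"
          using M_bound[OF d assms R0 c conjunct1[OF N] N1 order_refl] r by blast
        also have "\<dots> \<le> 1 - a"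
        proof -
          have "exp (1/2) \<le> exp (real N * \<delta> / 2)" using N by (simp add: mult.commute)
          also have "\<dots> \<le> exp (real N * \<delta> / 2) * cosh r" using cosh_real_ge_1[of r] by simp
          finally have "exp (1/2) - cosh 1 \<le> exp (real N * \<delta> / 2) * cosh r - cosh 1" by simp
          then have "a \<le> W c (real N * \<delta>) r" unfolding a_def W_def using c(1) by (intro mult_left_mono) auto
          then show ?thesis by simp
        qed
        finally show "integral {0..1} (\<lambda>r'. kpow (g0 A \<delta>) N r r') \<le> 1 - a" .
      qed
    qed
  qed
qed


end
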